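(* Even for two teams and nonnegative-value players who all strictly prefer the same team, there may not exist an allocation that is both EF1 and justified envy-free.
   Context: Setting: teams $T=[n]$, players $P=\{p_1,\dots,p_m\}$. Each player $p$ has a complete, transitive weak preference $\succsim_p$ over $T$ (strict part $\succ_p$). Each team $i$ has an additive valuation $v_i$, $v_i(S)=\sum_{p\in S}v_i(p)$; nonnegative-value players means $v_i(p)\ge0$ for all $i,p$. An allocation is an ordered partition $(A_1,\dots,A_n)$ of $P$. $A$ is EF1 if for all distinct $i,j$ there are $X\subseteq A_i$, $Y\subseteq A_j$ with $|X\cup Y|\le1$ and $v_i(A_i\setminus X)\ge v_i(A_j\setminus Y)$. Given $A$, a player $p\in A_i$ has justified envy toward a player $q\in A_j$ if $j\succ_p i$ and $v_j(p)>v_j(q)$. $A$ is justified envy-free (justified EF) if no player has justified envy toward another player. *)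

theory Defs
  imports Main "HOL-Library.Library"
begin

text \<open>Teams are 0..<n (i.e. [n] shifted by one). Players form a finite set P.
  pref p i j means: player p weakly prefers team i to team j.
  v i p is the value of player p for team i; bundles are valued additively.\<close>

definition weak_pref_order :: "nat \<Rightarrow> ('p \<Rightarrow> nat \<Rightarrow> nat \<Rightarrow> bool) \<Rightarrow> 'p set \<Rightarrow> bool" where
  "weak_pref_order n pref P \<longleftrightarrow>
     (\<forall>p\<in>P. (\<forall>i\<in>{0..<n}. \<forall>j\<in>{0..<n}. pref p i j \<or> pref p j i) \<and>
            (\<forall>i\<in>{0..<n}. \<forall>j\<in>{0..<n}. \<forall>k\<in>{0..<n}. pref p i j \<longrightarrow> pref p j k \<longrightarrow> pref p i k))"

definition strict_pref :: "('p \<Rightarrow> nat \<Rightarrow> nat \<Rightarrow> bool) \<Rightarrow> 'p \<Rightarrow> nat \<Rightarrow> nat \<Rightarrow> bool" where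
  "strict_pref pref p i j \<longleftrightarrow> pref p i j \<and> \<not> pref p j i"

definition val :: "(nat \<Rightarrow> 'p \<Rightarrow> real) \<Rightarrow> nat \<Rightarrow> 'p set \<Rightarrow> real" where
  "val v i S = (\<Sum>p\<in>S. v i p)"

definition is_allocation :: "nat \<Rightarrow> 'p set \<Rightarrow> (nat \<Rightarrow> 'p set) \<Rightarrow> bool" where
  "is_allocation n P A \<longleftrightarrow>
     (\<Union>i\<in>{0..<n}. A i) = P \<and>
     (\<forall>i\<in>{0..<n}. \<forall>j\<in>{0..<n}. i \<noteq> j \<longrightarrow> A i \<inter> A j = {})"

definition EF1 :: "nat \<Rightarrow> (nat \<Rightarrow> 'p \<Rightarrow> real) \<Rightarrow> (nat \<Rightarrow> 'p set) \<Rightarrow> bool" where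
  "EF1 n v A \<longleftrightarrow>
     (\<forall>i\<in>{0..<n}. \<forall>j\<in>{0..<n}. i \<noteq> j \<longrightarrow>
        (\<exists>X Y. X \<subseteq> A i \<and> Y \<subseteq> A j \<and> card (X \<union> Y) \<le> 1 \<and> finite (X \<union> Y) \<and>
               val v i (A i - X) \<ge> val v i (A j - Y)))"

definition justified_envy :: "('p \<Rightarrow> nat \<Rightarrow> nat \<Rightarrow> bool) \<Rightarrow> (nat \<Rightarrow> 'p \<Rightarrow> real) \<Rightarrow> 'p \<Rightarrow> nat \<Rightarrow> 'p \<Rightarrow> nat \<Rightarrow> bool" where
  "justified_envy pref v p i q j \<longleftrightarrow> strict_pref pref p j i \<and> v j p > v j q"

definition justified_EF :: "nat \<Rightarrow> ('p \<Rightarrow> nat \<Rightarrow> nat \<Rightarrow> bool) \<Rightarrow> (nat \<Rightarrow> 'p \<Rightarrow> real) \<Rightarrow> (nat \<Rightarrow> 'p set) \<Rightarrow> bool" where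
  "justified_EF n pref v A \<longleftrightarrow>
     (\<forall>i\<in>{0..<n}. \<forall>j\<in>{0..<n}. \<forall>p\<in>A i. \<forall>q\<in>A j. \<not> justified_envy pref v p i q j)"

end

theory Submission
  imports Defs
begin

lemma val_remove_le:
  fixes f :: "'p \<Rightarrow> real"
  assumes "finite A" "Y \<subseteq> A" "card Y \<le> 1" "finite Y" "\<forall>p\<in>A. f p \<le> M" "M \<ge> 0"
  shows "sum f (A - Y) \<ge> sum f A - M"
proof -
  have "Y = {} \<or> (\<exists>y. Y = {y})" using assms(3,4)
    by (metis card_0_eq card_1_singletonE le_Suc_eq One_nat_def le_zero_eq)
  then show ?thesis
  proof
    assume "Y = {}" then show ?thesis using assms by simp
  next
    assume "\<exists>y. Y = {y}"
    then obtain y where y: "Y = {y}" by blast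
    have "sum f A = f y + sum f (A - Y)" using assms(1,2) y sum.remove[of A y f]
      by simp
    moreover have "f y \<le> M" using assms y by auto
    ultimately show ?thesis by linarith
  qed
qed

lemma val_sub_le:
  fixes f :: "'p \<Rightarrow> real"
  assumes "finite A" "\<forall>p\<in>A. f p \<ge> 0"
  shows "sum f (A - X) \<le> sum f A"
  using assms by (intro sum_mono2) auto

theorem proposition6:
  shows "\<exists>(P :: nat set) pref v.
     finite P \<and> weak_pref_order 2 pref P \<and>
     (\<forall>i\<in>{0..<2}. \<forall>p\<in>P. v i p \<ge> 0) \<and>
     (\<exists>t\<in>{0..<2}. \<forall>p\<in>P. \<forall>i\<in>{0..<2}. i \<noteq> t \<longrightarrow> strict_pref pref p t i) \<and>
     \<not> (\<exists>A. is_allocation 2 P A \<and> EF1 2 v A \<and> justified_EF 2 pref v A)"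
proof -
  define P :: "nat set" where "P = {0,1,2,3}"
  define pref :: "nat \<Rightarrow> nat \<Rightarrow> nat \<Rightarrow> bool" where "pref = (\<lambda>p i j. i \<le> j)"
  define v :: "nat \<Rightarrow> nat \<Rightarrow> real" where
    "v = (\<lambda>i p. if i = 0 then 13 - real p else (if p < 2 then 1 else 0))"
  have noA: "\<not> (\<exists>A. is_allocation 2 P A \<and> EF1 2 v A \<and> justified_EF 2 pref v A)"
  proof
    assume "\<exists>A. is_allocation 2 P A \<and> EF1 2 v A \<and> justified_EF 2 pref v A"
    then obtain A where al: "is_allocation 2 P A" and ef: "EF1 2 v A"
      and je: "justified_EF 2 pref v A" by blast
    have un: "A 0 \<union> A 1 = P" and dj: "A 0 \<inter> A 1 = {}"
      proof -
      have "{0..<2::nat} = {0,1}" by auto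
      then show "A 0 \<union> A 1 = P" "A 0 \<inter> A 1 = {}" using al unfolding is_allocation_def by auto
    qed
    have down: "\<And>p q. p \<in> A 1 \<Longrightarrow> q \<in> A 0 \<Longrightarrow> \<not> p < q"
    proof -
      fix p q assume "p \<in> A 1" "q \<in> A 0"
      then have "\<not> justified_envy pref v p 1 q 0" using je unfolding justified_EF_def by auto
      then show "\<not> p < q" by (auto simp: justified_envy_def strict_pref_def pref_def v_def)
    qed
    have b: "A 1 = P - A 0" using un dj by blast
    have fa: "finite (A 0)" "finite (A 1)" using un by (auto simp: P_def intro: finite_subset)
    have ef01: "\<exists>X Y. X \<subseteq> A 0 \<and> Y \<subseteq> A 1 \<and> card (X \<union> Y) \<le> 1 \<and> finite (X \<union> Y) \<and>
               val v 0 (A 0 - X) \<ge> val v 0 (A 1 - Y)"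
      using ef unfolding EF1_def by force
    have ef10: "\<exists>X Y. X \<subseteq> A 1 \<and> Y \<subseteq> A 0 \<and> card (X \<union> Y) \<le> 1 \<and> finite (X \<union> Y) \<and>
               val v 1 (A 1 - X) \<ge> val v 1 (A 0 - Y)"
      using ef unfolding EF1_def by force
    have cases: "A 0 = {} \<or> A 0 = {0} \<or> 1 \<in> A 0 \<and> 0 \<in> A 0"
    proof -
      have "A 0 \<subseteq> {0,1,2,3}" using un P_def by blast
      show ?thesis
      proof (cases "1 \<in> A 0")
        case True
        then have "0 \<in> A 0" using down[of 0 1] b P_def by auto
        then show ?thesis using True by blast
      next
        case False
        then have "2 \<notin> A 0" "3 \<notin> A 0" using down[of 1 2] down[of 1 3] b P_def by auto
        then show ?thesis using False \<open>A 0 \<subseteq> {0,1,2,3}\<close> by blast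
      qed
    qed
    have cardle: "card X \<le> 1" "finite X" "card Y \<le> 1" "finite Y"
      if "card (X \<union> Y) \<le> 1" "finite (X \<union> Y)" for X Y :: "nat set"
      using that card_mono[of "X \<union> Y" X] card_mono[of "X \<union> Y" Y] by auto
    show False
      using cases
    proof (elim disjE)
      assume a: "A 0 = {}"
      then have b': "A 1 = {0,1,2,3}" using b P_def by auto
      from ef01 obtain X Y where h: "X \<subseteq> A 0" "Y \<subseteq> A 1" "card (X \<union> Y) \<le> 1" "finite (X \<union> Y)"
        "val v 0 (A 0 - X) \<ge> val v 0 (A 1 - Y)" by blast
      have "val v 0 (A 1 - Y) \<ge> val v 0 (A 1) - 13"
        unfolding val_def using cardle[OF h(3,4)] h(2) fa b'
        by (intro val_remove_le) (auto simp: v_def)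
      moreover have "val v 0 (A 1) = 46" using b' by (simp add: val_def v_def)
      ultimately show False using h(5) a by (simp add: val_def)
    next
      assume a: "A 0 = {0}"
      then have b': "A 1 = {1,2,3}" using b P_def by auto
      from ef01 obtain X Y where h: "X \<subseteq> A 0" "Y \<subseteq> A 1" "card (X \<union> Y) \<le> 1" "finite (X \<union> Y)"
        "val v 0 (A 0 - X) \<ge> val v 0 (A 1 - Y)" by blast
      have "val v 0 (A 1 - Y) \<ge> val v 0 (A 1) - 13"
        unfolding val_def using cardle[OF h(3,4)] h(2) fa b'
        by (intro val_remove_le) (auto simp: v_def)
      moreover have "val v 0 (A 1) = 33" using b' by (simp add: val_def v_def)
      moreover have "val v 0 (A 0 - X) \<le> val v 0 (A 0)"
        unfolding val_def using fa by (intro val_sub_le) (auto simp: v_def a)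
      moreover have "val v 0 (A 0) = 13" using a by (simp add: val_def v_def)
      ultimately show False using h(5) by linarith
    next
      assume a: "1 \<in> A 0 \<and> 0 \<in> A 0"
      from ef10 obtain X Y where h: "X \<subseteq> A 1" "Y \<subseteq> A 0" "card (X \<union> Y) \<le> 1" "finite (X \<union> Y)"
        "val v 1 (A 1 - X) \<ge> val v 1 (A 0 - Y)" by blast
      have a0: "A 0 = {0,1} \<union> (A 0 - {0,1})" using a by blast
      have "val v 1 (A 0) = 2"
      proof -
        have "val v 1 (A 0) = sum (v 1) {0,1} + sum (v 1) (A 0 - {0,1})"
          unfolding val_def using fa(1) a by (subst a0, subst sum.union_disjoint) auto
        moreover have "sum (v 1) (A 0 - {0,1}) = 0"
          by (rule sum.neutral) (auto simp: v_def)
        ultimately show ?thesis by (simp add: v_def)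
      qed
      moreover have "val v 1 (A 0 - Y) \<ge> val v 1 (A 0) - 1"
        unfolding val_def using cardle[OF h(3,4)] h(2) fa
        by (intro val_remove_le) (auto simp: v_def)
      moreover have "val v 1 (A 1 - X) = 0"
        unfolding val_def
      proof (intro sum.neutral ballI)
        fix x assume "x \<in> A 1 - X"
        then have "x \<noteq> 0" "x \<noteq> 1" using a dj by auto
        then have "\<not> x < 2" by linarith
        then show "v 1 x = 0" by (simp add: v_def)
      qed
      ultimately show False using h(5) by linarith
    qed
  qed
  have "finite P" by (simp add: P_def)
  moreover have "weak_pref_order 2 pref P" by (auto simp: weak_pref_order_def pref_def)
  moreover have "\<forall>i\<in>{0..<2}. \<forall>p\<in>P. v i p \<ge> 0" by (auto simp: v_def P_def)
  moreover have "\<exists>t\<in>{0..<2}. \<forall>p\<in>P. \<forall>i\<in>{0..<2}. i \<noteq> t \<longrightarrow> strict_pref pref p t i"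
    by (rule bexI[of _ 0]) (auto simp: strict_pref_def pref_def)
  ultimately show ?thesis using noA by blast
qed

end
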